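(* Let $N \ge \Delta \ge 1$ be integers. Then: (1) $g(N,1)=0$. (2) If $\Delta \geq 2$ and $N-1 \equiv k \pmod{\Delta - 1}$ with $0 \leq k \leq \Delta -2$, then $g(N,\Delta) = \frac{(N-k-1)\Delta}{2} + \binom{k+1}{2} \leq \frac{(N-1)\Delta}{2}$. (3) If $\Delta \geq 2$, then $g(N+1,\Delta) \geq g(N,\Delta)+1$. (4) If $N > \Delta$, then $g(N,\Delta+1) \geq g(N,\Delta)+1$.
   Context: All graphs are finite and simple; $L(F)$ is the line graph of $F$, $e(\cdot)$ the number of edges, $\Delta(\cdot)$ the maximum degree, $\delta(\cdot)$ the minimum degree. For integers $N \ge \Delta \ge 1$, $g(N,\Delta) = \max\{ e(L(F)) : F \text{ acyclic}, e(F)=N, \Delta(F)=\Delta, \delta(F)\geq 1\}$. *)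

theory Defs
  imports Complex_Main "HOL-Number_Theory.Cong"
begin

text \<open>A finite simple graph is represented by its edge set: a finite set of
  2-element subsets of nat. Since delta(F) >= 1 (no isolated vertices), the vertex
  set is exactly the union of the edges.\<close>

definition simple_graph :: "nat set set \<Rightarrow> bool" where
  "simple_graph E \<longleftrightarrow> finite E \<and> (\<forall>e\<in>E. card e = 2)"

definition verts :: "nat set set \<Rightarrow> nat set" where
  "verts E = \<Union>E"

definition degree :: "nat set set \<Rightarrow> nat \<Rightarrow> nat" where
  "degree E v = card {e\<in>E. v \<in> e}"

definition max_degree :: "nat set set \<Rightarrow> nat" where
  "max_degree E = Max (degree E ` verts E)"

definition has_cycle :: "nat set set \<Rightarrow> bool" where
  "has_cycle E \<longleftrightarrow> (\<exists>vs. length vs \<ge> 3 \<and> distinct vs \<and>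
      (\<forall>i < length vs - 1. {vs ! i, vs ! Suc i} \<in> E) \<and> {last vs, hd vs} \<in> E)"

definition acyclic_graph :: "nat set set \<Rightarrow> bool" where
  "acyclic_graph E \<longleftrightarrow> simple_graph E \<and> \<not> has_cycle E"

definition line_graph_edges :: "nat set set \<Rightarrow> nat set set set" where
  "line_graph_edges E = {{e1, e2} | e1 e2. e1 \<in> E \<and> e2 \<in> E \<and> e1 \<noteq> e2 \<and> e1 \<inter> e2 \<noteq> {}}"

definition eL :: "nat set set \<Rightarrow> nat" where
  "eL E = card (line_graph_edges E)"

text \<open>delta(F) >= 1 holds automatically since verts E is the union of the edges.\<close>
definition g :: "nat \<Rightarrow> nat \<Rightarrow> nat" where
  "g N D = Max {eL F | F. acyclic_graph F \<and> card F = N \<and> max_degree F = D}"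

end

theory Submission
  imports Defs
begin

lemma finite_verts: "simple_graph E \<Longrightarrow> finite (verts E)"
  unfolding simple_graph_def verts_def
  by (metis card.infinite finite_Union zero_neq_numeral)

lemma verts_insert: "verts (insert a E) = a \<union> verts E"
  unfolding verts_def by auto

lemma has_cycle_mono: "E' \<subseteq> E \<Longrightarrow> has_cycle E' \<Longrightarrow> has_cycle E"
  unfolding has_cycle_def by blast

lemma cycle_nbrs:
  assumes len: "length vs \<ge> 3" and dist: "distinct vs"
    and ed: "\<forall>i < length vs - 1. {vs!i, vs!Suc i} \<in> E" and cl: "{last vs, hd vs} \<in> E"
    and x: "x \<in> set vs"
  shows "\<exists>a b. a \<noteq> b \<and> {x,a} \<in> E \<and> {x,b} \<in> E"
proof -
  obtain i where i: "i < length vs" "x = vs!i" by (metis in_set_conv_nth x)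
  define n where "n = length vs"
  have ne: "vs \<noteq> []" using len by auto
  have hd: "hd vs = vs!0" using ne by (simp add: hd_conv_nth)
  have last: "last vs = vs!(n-1)" using ne by (simp add: last_conv_nth n_def)
  have neq: "\<And>j l. j < n \<Longrightarrow> l < n \<Longrightarrow> j \<noteq> l \<Longrightarrow> vs!j \<noteq> vs!l"
    using dist n_def by (simp add: nth_eq_iff_index_eq)
  consider "i = 0" | "i = n-1" | "0 < i \<and> i < n-1" using i n_def by linarith
  then show ?thesis
  proof cases
    case 1
    have "{x, vs!1} \<in> E" using ed 1 i len n_def by auto
    moreover have "{x, vs!(n-1)} \<in> E" using cl 1 i hd last by (simp add: insert_commute)
    moreover have "vs!1 \<noteq> vs!(n-1)" using neq len n_def by auto
    ultimately show ?thesis by blast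
  next
    case 2
    have "{vs!(n-2), vs!Suc (n-2)} \<in> E" using ed len n_def by auto
    moreover have "Suc (n-2) = n-1" using len n_def by auto
    ultimately have "{x, vs!(n-2)} \<in> E" using 2 i by (simp add: insert_commute)
    moreover have "{x, vs!0} \<in> E" using cl 2 i hd last by simp
    moreover have "vs!(n-2) \<noteq> vs!0" by (intro neq) (use len n_def in auto)
    ultimately show ?thesis by blast
  next
    case 3
    have "i - 1 < length vs - 1" using 3 n_def by auto
    then have "{vs!(i-1), vs!Suc (i-1)} \<in> E" using ed by blast
    moreover have "Suc (i-1) = i" using 3 by auto
    ultimately have "{x, vs!(i-1)} \<in> E" using i by (simp add: insert_commute)
    moreover have "{x, vs!Suc i} \<in> E" using ed 3 i n_def by auto
    moreover have "vs!(i-1) \<noteq> vs!Suc i" using neq 3 n_def by auto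
    ultimately show ?thesis by blast
  qed
qed

lemma acyclic_insert_pendant:
  assumes ac: "acyclic_graph E" and uw: "u \<noteq> w" and w: "w \<notin> verts E"
  shows "acyclic_graph (insert {u,w} E)"
proof -
  have sg: "simple_graph (insert {u,w} E)"
    using ac uw unfolding acyclic_graph_def simple_graph_def by auto
  have "\<not> has_cycle (insert {u,w} E)"
  proof
    assume "has_cycle (insert {u,w} E)"
    then obtain vs where len: "length vs \<ge> 3" and dist: "distinct vs"
      and ed: "\<forall>i < length vs - 1. {vs!i, vs!Suc i} \<in> insert {u,w} E"
      and cl: "{last vs, hd vs} \<in> insert {u,w} E"
      unfolding has_cycle_def by blast
    show False
    proof (cases "w \<in> set vs")
      case True
      from cycle_nbrs[OF len dist ed cl True] obtain a b where
        ab: "a \<noteq> b" "{w,a} \<in> insert {u,w} E" "{w,b} \<in> insert {u,w} E" by blast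
      have "{w,a} \<notin> E" "{w,b} \<notin> E" using w unfolding verts_def by auto
      then have "{w,a} = {u,w}" "{w,b} = {u,w}" using ab by auto
      then have "a = u" "b = u" using uw by (auto simp: doubleton_eq_iff)
      then show False using ab by simp
    next
      case False
      have ne: "vs \<noteq> []" using len by auto
      have "\<forall>i < length vs - 1. {vs!i, vs!Suc i} \<in> E"
      proof (intro allI impI)
        fix i assume "i < length vs - 1"
        then have "{vs!i, vs!Suc i} \<in> insert {u,w} E" "vs!Suc i \<in> set vs" "vs!i \<in> set vs" using ed by auto
        then show "{vs!i, vs!Suc i} \<in> E" using False by (auto simp: doubleton_eq_iff)
      qed
      moreover have "{last vs, hd vs} \<in> E" using cl False ne by (auto simp: doubleton_eq_iff)
      ultimately have "has_cycle E" using len dist unfolding has_cycle_def by blast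
      then show False using ac unfolding acyclic_graph_def by simp
    qed
  qed
  then show ?thesis using sg unfolding acyclic_graph_def by simp
qed

lemma degree_insert:
  assumes "a \<notin> E" "finite E"
  shows "degree (insert a E) v = degree E v + (if v \<in> a then 1 else 0)"
proof (cases "v \<in> a")
  case True
  then have "{e\<in>insert a E. v \<in> e} = insert a {e\<in>E. v \<in> e}" by auto
  then show ?thesis using assms True unfolding degree_def by simp
next
  case False
  then have "{e\<in>insert a E. v \<in> e} = {e\<in>E. v \<in> e}" by auto
  then show ?thesis using False unfolding degree_def by simp
qed

definition is_path :: "nat set set \<Rightarrow> nat list \<Rightarrow> bool" where
  "is_path E vs \<longleftrightarrow> distinct vs \<and> (\<forall>i < length vs - 1. {vs!i, vs!Suc i} \<in> E)"

lemma path_verts: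
  assumes "is_path E vs" "length vs \<ge> 2"
  shows "set vs \<subseteq> verts E"
proof
  fix x assume "x \<in> set vs"
  then obtain i where i: "i < length vs" "x = vs!i" by (metis in_set_conv_nth)
  show "x \<in> verts E"
  proof (cases "i < length vs - 1")
    case True
    then have "{vs!i, vs!Suc i} \<in> E" using assms unfolding is_path_def by blast
    then show ?thesis using i unfolding verts_def by blast
  next
    case False
    then have "i - 1 < length vs - 1" "Suc (i-1) = i" using i assms(2) by auto
    then have "{vs!(i-1), vs!i} \<in> E" using assms unfolding is_path_def by metis
    then show ?thesis using i unfolding verts_def by blast
  qed
qed

lemma leaf_exists:
  assumes ac: "acyclic_graph E" and ne: "E \<noteq> {}"
  shows "\<exists>y e. e \<in> E \<and> y \<in> e \<and> (\<forall>e'\<in>E. y \<in> e' \<longrightarrow> e' = e)"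
proof -
  have sg: "simple_graph E" and nc: "\<not> has_cycle E" using ac unfolding acyclic_graph_def by auto
  have fv: "finite (verts E)" using sg by (rule finite_verts)
  obtain e0 where "e0 \<in> E" using ne by blast
  then have "card e0 = 2" using sg unfolding simple_graph_def by auto
  then obtain a b where ab: "e0 = {a,b}" "a \<noteq> b" by (metis card_2_iff)
  let ?P = "\<lambda>vs. is_path E vs \<and> length vs \<ge> 2"
  have P0: "?P [a,b]" using ab \<open>e0 \<in> E\<close> unfolding is_path_def by (auto simp: less_Suc_eq)
  have bnd: "\<forall>vs. ?P vs \<longrightarrow> length vs < Suc (card (verts E))"
  proof (intro allI impI)
    fix vs assume "?P vs"
    then have "set vs \<subseteq> verts E" "distinct vs" using path_verts is_path_def by auto
    then have "length vs \<le> card (verts E)" using fv by (metis card_mono distinct_card)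
    then show "length vs < Suc (card (verts E))" by simp
  qed
  obtain vs where P: "?P vs" and mx: "\<forall>ws. ?P ws \<longrightarrow> length ws \<le> length vs"
    using ex_has_greatest_nat[where f=length, OF P0 bnd] by blast
  define n where "n = length vs"
  have n2: "n \<ge> 2" using P n_def by simp
  have dist: "distinct vs" and ed: "\<forall>i < n - 1. {vs!i, vs!Suc i} \<in> E"
    using P n_def unfolding is_path_def by auto
  define y where "y = vs!(n-1)"
  define p where "p = vs!(n-2)"
  have ne': "vs \<noteq> []" using n2 n_def by auto
  have lasty: "last vs = y" using ne' y_def n_def by (simp add: last_conv_nth)
  have "Suc (n-2) = n-1" using n2 by simp
  then have eE: "{p, y} \<in> E" using ed n2 p_def y_def by (metis diff_less less_numeral_extra(1) zero_less_numeral diff_less_mono2 lessI less_le_trans)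
  have neqi: "\<And>j l. j < n \<Longrightarrow> l < n \<Longrightarrow> j \<noteq> l \<Longrightarrow> vs!j \<noteq> vs!l"
    using dist n_def by (simp add: nth_eq_iff_index_eq)
  have "\<forall>e'\<in>E. y \<in> e' \<longrightarrow> e' = {p,y}"
  proof (intro ballI impI)
    fix e' assume e': "e' \<in> E" "y \<in> e'"
    then have "card e' = 2" using sg unfolding simple_graph_def by auto
    then obtain z where z: "e' = {y,z}" "z \<noteq> y" using e'(2)
      by (metis card_2_iff doubleton_eq_iff insert_iff singletonD)
    show "e' = {p,y}"
    proof (cases "z = p")
      case True then show ?thesis using z by auto
    next
      case zp: False
      show ?thesis
      proof (cases "z \<in> set vs")
        case False
        have "?P (vs @ [z])"
          unfolding is_path_def
        proof (intro conjI allI impI)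
          show "distinct (vs @ [z])" using dist False by simp
          fix i assume i: "i < length (vs @ [z]) - 1"
          show "{(vs @ [z]) ! i, (vs @ [z]) ! Suc i} \<in> E"
          proof (cases "i < n - 1")
            case True
            then have "Suc i < n" "i < n" by auto
            then show ?thesis using True ed n_def by (simp add: nth_append)
          next
            case False
            then have "i = n - 1" using i n_def by simp
            then have "Suc i = n" "i < n" using n2 by auto
            then have "(vs@[z])!i = y" "(vs@[z])!Suc i = z" using \<open>i = n - 1\<close> n_def y_def
              by (simp_all add: nth_append)
            then show ?thesis using z e' by simp
          qed
        next
          show "length (vs @ [z]) \<ge> 2" using n2 n_def by simp
        qed
        then show ?thesis using mx n_def by fastforce
      next
        case True
        then obtain j where j: "j < n" "vs!j = z" using n_def by (metis in_set_conv_nth)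
        have "j \<noteq> n-1" using j z y_def by auto
        moreover have "j \<noteq> n-2" using j zp p_def by auto
        ultimately have jn: "j + 3 \<le> n" using j n2 by linarith
        define ws where "ws = drop j vs"
        have "length ws \<ge> 3" using jn ws_def n_def by simp
        moreover have "distinct ws" using dist ws_def by simp
        moreover have "\<forall>i < length ws - 1. {ws!i, ws!Suc i} \<in> E"
        proof (intro allI impI)
          fix i assume "i < length ws - 1"
          then have "j + i < n - 1" using ws_def n_def by simp
          then have "{vs!(j+i), vs!Suc (j+i)} \<in> E" using ed by blast
          then show "{ws!i, ws!Suc i} \<in> E" using ws_def jn n_def by simp
        qed
        moreover have "last ws = y" using ws_def lasty jn n_def by simp
        moreover have "hd ws = z" using ws_def j n_def by (simp add: hd_drop_conv_nth)
        moreover have "{y, z} \<in> E" using z e' by simp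
        ultimately have "has_cycle E" unfolding has_cycle_def by metis
        then show ?thesis using nc by simp
      qed
    qed
  qed
  moreover have "y \<in> {p,y}" by simp
  ultimately show ?thesis using eE by blast
qed

lemma card2_eq:
  assumes "card e = 2" "v \<in> e" "w \<in> e" "v \<noteq> w"
  shows "e = {v,w}"
proof -
  obtain a b where "e = {a,b}" "a \<noteq> b" using assms(1) by (metis card_2_iff)
  then show ?thesis using assms by auto
qed

lemma forest_verts:
  "acyclic_graph E \<Longrightarrow> E \<noteq> {} \<Longrightarrow> card E + 1 \<le> card (verts E)"
proof (induction "card E" arbitrary: E rule: less_induct)
  case less
  have sg: "simple_graph E" using less.prems unfolding acyclic_graph_def by auto
  then have fE: "finite E" and c2: "\<forall>e\<in>E. card e = 2" unfolding simple_graph_def by auto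
  have fv: "finite (verts E)" using sg by (rule finite_verts)
  obtain y e where ye: "e \<in> E" "y \<in> e" "\<forall>e'\<in>E. y \<in> e' \<longrightarrow> e' = e"
    using leaf_exists less.prems by blast
  define E' where "E' = E - {e}"
  have sg': "simple_graph E'" using sg unfolding simple_graph_def E'_def by auto
  have "\<not> has_cycle E'" using has_cycle_mono[of E' E] less.prems(1) E'_def
    unfolding acyclic_graph_def by blast
  then have ac': "acyclic_graph E'" using sg' unfolding acyclic_graph_def by blast
  have cE': "card E' = card E - 1" unfolding E'_def using ye(1) fE by (simp add: card_Diff_singleton)
  have vsub: "verts E' \<subseteq> verts E - {y}" using ye unfolding verts_def E'_def by blast
  have yv: "y \<in> verts E" using ye unfolding verts_def by auto
  show ?case
  proof (cases "E' = {}")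
    case True
    then have "E = {e}" using ye(1) E'_def by blast
    then show ?thesis using c2 ye(1) unfolding verts_def by simp
  next
    case False
    have "card E > 0" using fE ye card_gt_0_iff by blast
    then have "card E' < card E" using cE' by simp
    then have "card E' + 1 \<le> card (verts E')" using less.hyps ac' False by blast
    also have "\<dots> \<le> card (verts E - {y})" using vsub fv by (simp add: card_mono)
    also have "\<dots> = card (verts E) - 1" using yv fv by simp
    finally show ?thesis using cE' \<open>card E' < card E\<close> by linarith
  qed
qed

lemma handshake:
  assumes "simple_graph E"
  shows "(\<Sum>v\<in>verts E. degree E v) = 2 * card E"
proof -
  have fE: "finite E" and c2: "\<forall>e\<in>E. card e = 2" using assms unfolding simple_graph_def by auto
  have fv: "finite (verts E)" using assms by (rule finite_verts)
  have "\<forall>e\<in>E. card {v\<in>verts E. v \<in> e} = 2"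
  proof
    fix e assume "e \<in> E"
    then have "{v\<in>verts E. v \<in> e} = e" unfolding verts_def by auto
    then show "card {v\<in>verts E. v \<in> e} = 2" using c2 \<open>e \<in> E\<close> by simp
  qed
  then show ?thesis unfolding degree_def using sum_multicount[OF fv fE] by blast
qed

lemma eL_sum:
  assumes "simple_graph E"
  shows "eL E = (\<Sum>v\<in>verts E. degree E v choose 2)"
proof -
  have fE: "finite E" and c2: "\<forall>e\<in>E. card e = 2" using assms unfolding simple_graph_def by auto
  have fv: "finite (verts E)" using assms by (rule finite_verts)
  define St where "St v = {e\<in>E. v \<in> e}" for v :: nat
  define P where "P v = {B. B \<subseteq> St v \<and> card B = 2}" for v :: nat
  have fSt: "finite (St v)" for v :: nat using fE St_def by simp
  have "line_graph_edges E = (\<Union>v\<in>verts E. P v)"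
  proof
    show "line_graph_edges E \<subseteq> (\<Union>v\<in>verts E. P v)"
    proof
      fix L assume "L \<in> line_graph_edges E"
      then obtain e1 e2 where L: "L = {e1,e2}" "e1 \<in> E" "e2 \<in> E" "e1 \<noteq> e2" "e1 \<inter> e2 \<noteq> {}"
        unfolding line_graph_edges_def by blast
      then obtain v where "v \<in> e1" "v \<in> e2" by blast
      then have "v \<in> verts E" "L \<in> P v" using L unfolding verts_def P_def St_def by auto
      then show "L \<in> (\<Union>v\<in>verts E. P v)" by blast
    qed
  next
    show "(\<Union>v\<in>verts E. P v) \<subseteq> line_graph_edges E"
    proof
      fix L assume "L \<in> (\<Union>v\<in>verts E. P v)"
      then obtain v where "L \<subseteq> St v" "card L = 2" unfolding P_def by blast
      then obtain e1 e2 where "L = {e1,e2}" "e1 \<noteq> e2" by (metis card_2_iff)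
      then show "L \<in> line_graph_edges E" using \<open>L \<subseteq> St v\<close> unfolding St_def line_graph_edges_def by blast
    qed
  qed
  moreover have "card (\<Union>v\<in>verts E. P v) = (\<Sum>v\<in>verts E. card (P v))"
  proof (rule card_UN_disjoint[OF fv])
    show "\<forall>v\<in>verts E. finite (P v)" using fSt unfolding P_def by simp
    show "\<forall>v\<in>verts E. \<forall>w\<in>verts E. v \<noteq> w \<longrightarrow> P v \<inter> P w = {}"
    proof (intro ballI impI)
      fix v w :: nat assume vw: "v \<noteq> w"
      show "P v \<inter> P w = {}"
      proof (rule ccontr)
        assume "P v \<inter> P w \<noteq> {}"
        then obtain L where L: "L \<subseteq> St v" "L \<subseteq> St w" "card L = 2" unfolding P_def by blast
        then obtain e1 e2 where e: "L = {e1,e2}" "e1 \<noteq> e2" by (metis card_2_iff)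
        then have "e1 \<in> E" "e2 \<in> E" "v \<in> e1" "w \<in> e1" "v \<in> e2" "w \<in> e2" using L unfolding St_def by auto
        then have "e1 = {v,w}" "e2 = {v,w}" using c2 vw card2_eq[of e1 v w] card2_eq[of e2 v w] by auto
        then show False using e by simp
      qed
    qed
  qed
  moreover have "card (P v) = degree E v choose 2" for v :: nat
    unfolding P_def degree_def St_def[symmetric] using n_subsets[OF fSt] by simp
  ultimately show ?thesis unfolding eL_def by simp
qed

definition Gf :: "nat \<Rightarrow> nat \<Rightarrow> nat" where
  "Gf m S = (S div m) * m * (m+1) + (S mod m) * (S mod m + 1)"

lemma qr_div_mod:
  assumes "r < (m::nat)"
  shows "(q*m + r) div m = q" "(q*m + r) mod m = r"
  using assms by auto

lemma Gf_qr: "r < m \<Longrightarrow> Gf m (q*m + r) = q*m*(m+1) + r*(r+1)"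
  unfolding Gf_def using qr_div_mod by simp

lemma Gf_step:
  assumes m: "m \<ge> 1" and x: "x \<le> m"
  shows "Gf m a + x*(x+1) \<le> Gf m (a + x)"
proof -
  define q where "q = a div m"
  define k where "k = a mod m"
  have a: "a = q*m + k" and km: "k < m" using m unfolding q_def k_def by auto
  have Ga: "Gf m a = q*m*(m+1) + k*(k+1)" using Gf_qr[OF km] a by simp
  show ?thesis
  proof (cases "k + x < m")
    case True
    have e: "a + x = q*m + (k+x)" using a by simp
    have "Gf m (a+x) = q*m*(m+1) + (k+x)*(k+x+1)" unfolding e by (rule Gf_qr[OF True])
    moreover have "(k+x)*(k+x+1) = k*(k+1) + x*(x+1) + 2*k*x" by (simp add: algebra_simps)
    ultimately show ?thesis using Ga by simp
  next
    case False
    then obtain r where r: "k + x = m + r" by (metis le_add_diff_inverse not_less)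
    have rm: "r < m" using r km x by linarith
    have e: "a + x = (q+1)*m + r" using a r by simp
    have G2: "Gf m (a+x) = (q+1)*m*(m+1) + r*(r+1)" unfolding e by (rule Gf_qr[OF rm])
    define P where "P = (int m - int k)*(int m - int x)"
    have hr: "int r = int k + int x - int m" using r by simp
    have id: "int m * (int m + 1) + int r * (int r + 1) = int k * (int k + 1) + int x * (int x + 1) + 2*P"
      unfolding P_def hr by (simp add: algebra_simps)
    have "P \<ge> 0" unfolding P_def using km x by simp
    then have "int (k*(k+1) + x*(x+1)) \<le> int (m*(m+1) + r*(r+1))"
      by (simp only: of_nat_add of_nat_mult of_nat_1 id)
    then have "m*(m+1) + r*(r+1) \<ge> k*(k+1) + x*(x+1)" by linarith
    then show ?thesis using Ga G2 by (simp add: algebra_simps)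
  qed
qed

lemma Gf_inc:
  assumes m: "m \<ge> 1"
  shows "Gf m (S+1) = Gf m S + 2*(1 + S mod m)"
proof -
  define q where "q = S div m"
  define k where "k = S mod m"
  have a: "S = q*m + k" and km: "k < m" using m unfolding q_def k_def by auto
  have Ga: "Gf m S = q*m*(m+1) + k*(k+1)" using Gf_qr[OF km] a by simp
  show ?thesis
  proof (cases "k + 1 < m")
    case True
    have e: "S + 1 = q*m + (k+1)" using a by simp
    have "Gf m (S+1) = q*m*(m+1) + (k+1)*(k+1+1)" unfolding e by (rule Gf_qr[OF True])
    then show ?thesis using Ga k_def by (simp add: algebra_simps)
  next
    case False
    then have km1: "k + 1 = m" using km by simp
    have "S + 1 = (q+1)*m + 0" using a km1 by simp
    then have "Gf m (S+1) = (q+1)*m*(m+1)" using Gf_qr[of 0 m "q+1"] m by simp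
    have mk: "m = k + 1" using km1 by simp
    have "Gf m S + 2*(1 + S mod m) = q*m*(m+1) + k*(k+1) + 2*(1+k)" using Ga k_def by simp
    also have "\<dots> = (q+1)*m*(m+1)" unfolding mk by (simp add: algebra_simps)
    finally show ?thesis using \<open>Gf m (S+1) = (q+1)*m*(m+1)\<close> by simp
  qed
qed

lemma Gf_mono:
  assumes m: "m \<ge> 1" and "S \<le> S'"
  shows "Gf m S \<le> Gf m S'"
proof -
  have "Gf m S \<le> Gf m (S + j)" for j
  proof (induction j)
    case (Suc j)
    then show ?case using Gf_inc[OF m, of "S + j"] by simp
  qed simp
  then show ?thesis using assms(2) by (metis le_add_diff_inverse)
qed

lemma Gf_list:
  assumes m: "m \<ge> 1" and "\<forall>x\<in>set xs. x \<le> m"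
  shows "(\<Sum>x\<leftarrow>xs. x*(x+1)) \<le> Gf m (sum_list xs)"
  using assms(2)
proof (induction xs)
  case Nil
  then show ?case by (simp add: Gf_def)
next
  case (Cons x xs)
  then have "(\<Sum>x\<leftarrow>xs. x*(x+1)) + x*(x+1) \<le> Gf m (sum_list xs) + x*(x+1)" by simp
  also have "\<dots> \<le> Gf m (sum_list xs + x)" using Gf_step[OF m] Cons.prems by simp
  finally show ?case by (simp add: add.commute)
qed

lemma Gf_set:
  assumes m: "m \<ge> 1" and "finite A" and "\<forall>v\<in>A. f v \<le> m"
  shows "(\<Sum>v\<in>A. f v*(f v+1)) \<le> Gf m (\<Sum>v\<in>A. f v)"
  using assms(2,3)
proof (induction A rule: finite_induct)
  case empty
  then show ?case by (simp add: Gf_def)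
next
  case (insert a A)
  then have "(\<Sum>v\<in>insert a A. f v*(f v+1)) = (\<Sum>v\<in>A. f v*(f v+1)) + f a*(f a+1)" by simp
  also have "\<dots> \<le> Gf m (\<Sum>v\<in>A. f v) + f a*(f a+1)" using insert by simp
  also have "\<dots> \<le> Gf m ((\<Sum>v\<in>A. f v) + f a)" using Gf_step[OF m] insert.prems by simp
  finally show ?case using insert by (simp add: add.commute)
qed

lemma LG_finite: "finite E \<Longrightarrow> finite (line_graph_edges E)"
proof -
  assume "finite E"
  moreover have "line_graph_edges E \<subseteq> Pow E" unfolding line_graph_edges_def by auto
  ultimately show ?thesis by (meson finite_Pow_iff finite_subset)
qed

lemma eL_insert_pendant:
  assumes sg: "simple_graph E" and uw: "u \<noteq> w" and w: "w \<notin> verts E"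
  shows "eL (insert {u,w} E) = eL E + degree E u"
proof -
  define a where "a = {u,w}"
  have fE: "finite E" using sg unfolding simple_graph_def by auto
  have wE: "\<forall>e\<in>E. w \<notin> e" using w unfolding verts_def by auto
  have aE: "a \<notin> E" using wE a_def by auto
  define S where "S = {e\<in>E. u \<in> e}"
  have iff: "\<forall>e\<in>E. (a \<inter> e \<noteq> {}) = (u \<in> e)" using wE a_def by auto
  have eq: "line_graph_edges (insert a E) = line_graph_edges E \<union> (\<lambda>e. {a,e}) ` S"
  proof
    show "line_graph_edges (insert a E) \<subseteq> line_graph_edges E \<union> (\<lambda>e. {a,e}) ` S"
    proof
      fix L assume "L \<in> line_graph_edges (insert a E)"
      then obtain e1 e2 where L: "L = {e1,e2}" "e1 \<in> insert a E" "e2 \<in> insert a E" "e1 \<noteq> e2" "e1 \<inter> e2 \<noteq> {}"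
        unfolding line_graph_edges_def by blast
      show "L \<in> line_graph_edges E \<union> (\<lambda>e. {a,e}) ` S"
      proof (cases "e1 = a")
        case True
        then have "e2 \<in> E" "u \<in> e2" using L iff by (auto simp: Int_commute)
        then show ?thesis using L True S_def by auto
      next
        case f1: False
        show ?thesis
        proof (cases "e2 = a")
          case True
          then have "e1 \<in> E" "u \<in> e1" using L iff f1 by (auto simp: Int_commute)
          then show ?thesis using L True S_def by (auto simp: insert_commute)
        next
          case False
          then have "L \<in> line_graph_edges E" using L f1 unfolding line_graph_edges_def by blast
          then show ?thesis by blast
        qed
      qed
    qed
  next
    show "line_graph_edges E \<union> (\<lambda>e. {a,e}) ` S \<subseteq> line_graph_edges (insert a E)"
    proof
      fix L assume "L \<in> line_graph_edges E \<union> (\<lambda>e. {a,e}) ` S"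
      then show "L \<in> line_graph_edges (insert a E)"
      proof
        assume "L \<in> line_graph_edges E"
        then show ?thesis unfolding line_graph_edges_def by blast
      next
        assume "L \<in> (\<lambda>e. {a,e}) ` S"
        then obtain e where e: "L = {a,e}" "e \<in> E" "u \<in> e" using S_def by blast
        then have "a \<noteq> e" "a \<inter> e \<noteq> {}" using aE a_def by auto
        then show ?thesis using e unfolding line_graph_edges_def by blast
      qed
    qed
  qed
  have disj: "line_graph_edges E \<inter> (\<lambda>e. {a,e}) ` S = {}"
  proof -
    have False if L1: "L \<in> line_graph_edges E" and L2: "L \<in> (\<lambda>e. {a,e}) ` S" for L
    proof -
      obtain e1 e2 where L: "L = {e1,e2}" "e1 \<in> E" "e2 \<in> E"
        using L1 unfolding line_graph_edges_def by blast
      obtain e where "L = {a,e}" using L2 by blast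
      then have "a \<in> {e1,e2}" using L by simp
      then have "a \<in> E" using L by blast
      then show False using aE by simp
    qed
    then show ?thesis by blast
  qed
  have inj: "inj_on (\<lambda>e. {a,e}) S"
  proof
    fix e e' assume "e \<in> S" "e' \<in> S" "{a,e} = {a,e'}"
    moreover have "e \<noteq> a" "e' \<noteq> a" using \<open>e \<in> S\<close> \<open>e' \<in> S\<close> aE S_def by auto
    ultimately show "e = e'" by (auto simp: doubleton_eq_iff)
  qed
  have fS: "finite S" using fE S_def by simp
  have "eL (insert a E) = card (line_graph_edges E) + card ((\<lambda>e. {a,e}) ` S)"
    unfolding eL_def eq using card_Un_disjoint[OF LG_finite[OF fE] finite_imageI[OF fS] disj] by simp
  also have "\<dots> = eL E + degree E u" using card_image[OF inj] unfolding eL_def degree_def S_def by simp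
  finally show ?thesis using a_def by simp
qed

definition par :: "nat \<Rightarrow> nat \<Rightarrow> nat" where
  "par m v = (if v \<le> 1 then 0 else ((v-2) div m)*m + 1)"

definition Cat :: "nat \<Rightarrow> nat \<Rightarrow> nat set set" where
  "Cat m n = (\<lambda>v. {v, par m v}) ` {1..n}"

lemma par_less: "v \<ge> 1 \<Longrightarrow> par m v < v"
proof -
  assume v: "v \<ge> 1"
  show ?thesis
  proof (cases "v \<le> 1")
    case True then show ?thesis using v par_def by simp
  next
    case False
    have h: "((v-2) div m)*m \<le> v - 2" by (simp add: div_times_less_eq_dividend)
    have "par m v = ((v-2) div m)*m + 1" using False par_def by simp
    then show ?thesis using h False by linarith
  qed
qed

lemma Cat_0: "Cat m 0 = {}" unfolding Cat_def by simp

lemma Cat_Suc: "Cat m (Suc n) = insert {Suc n, par m (Suc n)} (Cat m n)"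
proof -
  have "{1..Suc n} = insert (Suc n) {1..n}" by auto
  then show ?thesis unfolding Cat_def by simp
qed

lemma Cat_verts: "verts (Cat m n) \<subseteq> {0..n}"
proof
  fix x assume "x \<in> verts (Cat m n)"
  then obtain v where "v \<in> {1..n}" "x \<in> {v, par m v}" unfolding verts_def Cat_def by auto
  then show "x \<in> {0..n}" using par_less[of v m] by auto
qed

lemma Cat_notin: "Suc n \<notin> verts (Cat m n)" using Cat_verts by fastforce

lemma Cat_simple: "simple_graph (Cat m n)"
  unfolding simple_graph_def Cat_def
proof
  show "\<forall>e\<in>(\<lambda>v. {v, par m v}) ` {1..n}. card e = 2"
  proof
    fix e assume "e \<in> (\<lambda>v. {v, par m v}) ` {1..n}"
    then obtain v where "v \<ge> 1" "e = {v, par m v}" by auto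
    then show "card e = 2" using par_less[of v m] by auto
  qed
qed simp

lemma Cat_acyclic: "acyclic_graph (Cat m n)"
proof (induction n)
  case 0
  then show ?case unfolding Cat_0 acyclic_graph_def simple_graph_def has_cycle_def by simp
next
  case (Suc n)
  have "par m (Suc n) \<noteq> Suc n" using par_less[of "Suc n" m] by simp
  then have "acyclic_graph (insert {par m (Suc n), Suc n} (Cat m n))"
    using acyclic_insert_pendant[OF Suc.IH _ Cat_notin] by blast
  then show ?case unfolding Cat_Suc by (simp add: insert_commute)
qed

lemma Cat_card: "card (Cat m n) = n"
proof (induction n)
  case 0
  then show ?case by (simp add: Cat_0)
next
  case (Suc n)
  have "{Suc n, par m (Suc n)} \<notin> Cat m n" using Cat_notin[of n m] unfolding verts_def by auto
  moreover have "finite (Cat m n)" unfolding Cat_def by simp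
  ultimately show ?case unfolding Cat_Suc using Suc.IH by simp
qed

lemma Cat_fin: "finite (Cat m n)" unfolding Cat_def by simp

lemma Cat_deg_big: "u > n \<Longrightarrow> degree (Cat m n) u = 0"
proof -
  assume "u > n"
  then have "u \<notin> verts (Cat m n)" using Cat_verts by fastforce
  then have "{e \<in> Cat m n. u \<in> e} = {}" unfolding verts_def by auto
  then show ?thesis unfolding degree_def by (simp only: card.empty)
qed

lemma Cat_deg_Suc:
  "degree (Cat m (Suc n)) u = degree (Cat m n) u + (if u = Suc n \<or> u = par m (Suc n) then 1 else 0)"
proof -
  have "{Suc n, par m (Suc n)} \<notin> Cat m n" using Cat_notin[of n m] unfolding verts_def by auto
  then show ?thesis unfolding Cat_Suc using degree_insert[OF _ Cat_fin] by simp
qed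

lemma mod_pred:
  fixes m n :: nat
  assumes m: "m \<ge> 1" and "n mod m \<noteq> 0"
  shows "(n-1) div m = n div m" "(n-1) mod m + 1 = n mod m"
proof -
  define q where "q = n div m"
  define r where "r = n mod m"
  have n: "n = q*m + r" unfolding q_def r_def by (rule div_mult_mod_eq[symmetric])
  have rm: "r < m" "r \<ge> 1" using assms unfolding r_def by auto
  have "n - 1 = q*m + (r-1)" using n rm by simp
  moreover have "r - 1 < m" using rm by simp
  ultimately show "(n-1) div m = n div m" "(n-1) mod m + 1 = n mod m"
    using qr_div_mod[of "r-1" m q] rm q_def r_def by simp_all
qed

lemma Cat_key:
  assumes m: "m \<ge> 1" and n: "n \<ge> 1"
  shows "degree (Cat m n) (par m (n+1)) = 1 + (n-1) mod m"
  using n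
proof (induction n rule: nat_induct_at_least)
  case base
  have "par m (Suc (Suc 0)) = 1" unfolding par_def by simp
  moreover have "Cat m 1 = {{1, 0}}" unfolding Cat_def par_def by simp
  moreover have "{e \<in> {{1::nat,0}}. 1 \<in> e} = {{1,0}}" by auto
  ultimately show ?case unfolding degree_def by simp
next
  case (Suc n)
  show ?case
  proof (cases "n mod m = 0")
    case True
    have "(n div m) * m = n" using True by (metis div_mult_mod_eq add_0_right)
    then have p: "par m (Suc n + 1) = n + 1" unfolding par_def by simp
    have "degree (Cat m (Suc n)) (n+1) = degree (Cat m n) (n+1) + 1"
      using Cat_deg_Suc[of m n "n+1"] by simp
    also have "\<dots> = 1" using Cat_deg_big[of n "n+1" m] by simp
    finally show ?thesis using p True by simp
  next
    case False
    have pp: "par m (Suc n + 1) = par m (n + 1)" unfolding par_def using mod_pred[OF m False] Suc.hyps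
      by simp
    have ne: "par m (n+1) \<noteq> Suc n" using par_less[of "n+1" m] by simp
    have "degree (Cat m (Suc n)) (par m (n+1)) = degree (Cat m n) (par m (n+1)) + 1"
      using Cat_deg_Suc[of m n "par m (n+1)"] by simp
    then show ?thesis using pp Suc.IH mod_pred[OF m False] by simp
  qed
qed

lemma Cat_deg_le:
  assumes m: "m \<ge> 1"
  shows "degree (Cat m n) u \<le> m + 1"
proof (induction n arbitrary: u)
  case 0
  then show ?case unfolding Cat_0 degree_def by simp
next
  case (Suc n)
  consider "u = Suc n" | "u \<noteq> Suc n \<and> u = par m (Suc n)" | "u \<noteq> Suc n \<and> u \<noteq> par m (Suc n)" by blast
  then show ?case
  proof cases
    case 1
    then show ?thesis using Cat_deg_Suc[of m n u] Cat_deg_big[of n u m] by simp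
  next
    case 2
    have "degree (Cat m n) u \<le> m"
    proof (cases "n = 0")
      case True
      then show ?thesis unfolding degree_def by (simp add: Cat_0)
    next
      case False
      then have "degree (Cat m n) u = 1 + (n-1) mod m" using Cat_key[OF m, of n] 2 by simp
      moreover have "(n-1) mod m < m" using m by simp
      ultimately show ?thesis by simp
    qed
    then show ?thesis using Cat_deg_Suc[of m n u] 2 by simp
  next
    case 3
    then show ?thesis using Cat_deg_Suc[of m n u] Suc.IH[of u] by simp
  qed
qed

lemma Cat_deg_mono: "degree (Cat m n) u \<le> degree (Cat m (n + j)) u"
proof (induction j)
  case (Suc j)
  then show ?case using Cat_deg_Suc[of m "n+j" u] by simp
qed simp

lemma Cat_deg1:
  assumes m: "m \<ge> 1" and n: "n \<ge> m + 1"
  shows "degree (Cat m n) 1 = m + 1"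
proof -
  have p: "par m (m+1) = 1" unfolding par_def using m by simp
  have "degree (Cat m m) 1 = m" using Cat_key[OF m m] p m by simp
  then have "degree (Cat m (Suc m)) 1 = m + 1" using Cat_deg_Suc[of m m 1] p by simp
  then have "degree (Cat m n) 1 \<ge> m + 1" using Cat_deg_mono[of m "Suc m" 1 "n - Suc m"] n by simp
  then show ?thesis using Cat_deg_le[OF m] by (meson le_antisym)
qed

lemma Cat_maxdeg:
  assumes m: "m \<ge> 1" and n: "n \<ge> m + 1"
  shows "max_degree (Cat m n) = m + 1"
proof -
  have d1: "degree (Cat m n) 1 = m + 1" using Cat_deg1[OF m n] .
  then have "{e \<in> Cat m n. 1 \<in> e} \<noteq> {}" unfolding degree_def by (metis card.empty add_is_0 one_neq_zero)
  then have "1 \<in> verts (Cat m n)" unfolding verts_def by blast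
  moreover have "finite (verts (Cat m n))" using finite_verts[OF Cat_simple] .
  moreover have "m + 1 \<in> degree (Cat m n) ` verts (Cat m n)" using d1 calculation(1)
    by (metis image_eqI)
  ultimately show ?thesis unfolding max_degree_def using Cat_deg_le[OF m]
    by (intro Max_eqI) auto
qed

lemma Cat_eL:
  assumes m: "m \<ge> 1" and n: "n \<ge> 1"
  shows "2 * eL (Cat m n) = Gf m (n - 1)"
  using n
proof (induction n rule: nat_induct_at_least)
  case base
  have "Cat m 1 = {{1, 0}}" unfolding Cat_def par_def by simp
  moreover have "line_graph_edges {{1::nat, 0}} = {}" unfolding line_graph_edges_def by auto
  ultimately show ?case unfolding eL_def Gf_def by simp
next
  case (Suc n)
  have ne: "par m (Suc n) \<noteq> Suc n" using par_less[of "Suc n" m] by simp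
  have "eL (Cat m (Suc n)) = eL (Cat m n) + degree (Cat m n) (par m (Suc n))"
    unfolding Cat_Suc using eL_insert_pendant[OF Cat_simple ne Cat_notin] by (simp add: insert_commute)
  also have "\<dots> = eL (Cat m n) + 1 + (n-1) mod m" using Cat_key[OF m Suc.hyps] by simp
  finally have "2 * eL (Cat m (Suc n)) = Gf m (n - 1) + 2 * (1 + (n-1) mod m)" using Suc.IH by simp
  also have "\<dots> = Gf m (n - 1 + 1)" using Gf_inc[OF m] by simp
  finally show ?case using Suc.hyps by simp
qed

lemma deg_le_max:
  assumes "simple_graph F" "v \<in> verts F"
  shows "degree F v \<le> max_degree F"
  unfolding max_degree_def using finite_verts[OF assms(1)] assms(2) by simp

lemma deg_ge1:
  assumes "simple_graph F" "v \<in> verts F"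
  shows "degree F v \<ge> 1"
proof -
  have fF: "finite F" using assms(1) unfolding simple_graph_def by simp
  obtain e where "e \<in> F" "v \<in> e" using assms(2) unfolding verts_def by blast
  then have "{e\<in>F. v \<in> e} \<noteq> {}" by blast
  then show ?thesis unfolding degree_def using fF by (simp add: Suc_leI card_gt_0_iff)
qed

lemma two_choose: "2 * (d choose 2) = d * (d - 1)"
proof -
  have "even (d * (d - 1))" by (cases "even d") simp_all
  then show ?thesis unfolding choose_two by simp
qed

lemma upper:
  assumes m: "m \<ge> 1" and ac: "acyclic_graph F" and cF: "card F = N" and N: "N \<ge> 1"
    and md: "max_degree F = m + 1"
  shows "2 * eL F \<le> Gf m (N - 1)"
proof -
  have sg: "simple_graph F" using ac unfolding acyclic_graph_def by simp
  define V where "V = verts F"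
  have fV: "finite V" using finite_verts[OF sg] V_def by simp
  have ne: "F \<noteq> {}" using cF N by auto
  define x where "x v = degree F v - 1" for v
  have dx: "degree F v = x v + 1" if "v \<in> V" for v using deg_ge1[OF sg] that V_def x_def by fastforce
  have xm: "\<forall>v\<in>V. x v \<le> m" using deg_le_max[OF sg] md V_def x_def by fastforce
  have "2 * eL F = (\<Sum>v\<in>V. 2 * (degree F v choose 2))" unfolding eL_sum[OF sg] V_def
    by (simp add: sum_distrib_left)
  also have "\<dots> = (\<Sum>v\<in>V. x v * (x v + 1))"
  proof (rule sum.cong)
    fix v assume "v \<in> V"
    then show "2 * (degree F v choose 2) = x v * (x v + 1)" unfolding two_choose dx[OF \<open>v \<in> V\<close>] by simp
  qed simp
  also have "\<dots> \<le> Gf m (\<Sum>v\<in>V. x v)" using Gf_set[OF m fV xm] .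
  also have "\<dots> \<le> Gf m (N - 1)"
  proof (rule Gf_mono[OF m])
    have "(\<Sum>v\<in>V. degree F v) = (\<Sum>v\<in>V. x v + 1)" using dx by simp
    also have "\<dots> = (\<Sum>v\<in>V. x v) + card V" unfolding sum.distrib by simp
    finally have "(\<Sum>v\<in>V. x v) + card V = 2 * N" using handshake[OF sg] cF V_def by simp
    moreover have "N + 1 \<le> card V" using forest_verts[OF ac ne] cF V_def by simp
    ultimately show "(\<Sum>v\<in>V. x v) \<le> N - 1" by linarith
  qed
  finally show ?thesis .
qed

lemma g_formula:
  assumes m: "m \<ge> 1" and N: "N \<ge> m + 1"
  shows "2 * g N (m + 1) = Gf m (N - 1)"
proof -
  define S where "S = {eL F | F. acyclic_graph F \<and> card F = N \<and> max_degree F = m + 1}"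
  have cat: "eL (Cat m N) \<in> S" unfolding S_def using Cat_acyclic Cat_card Cat_maxdeg[OF m N] by blast
  have ub: "2 * y \<le> Gf m (N - 1)" if "y \<in> S" for y
    using that upper[OF m] N unfolding S_def by auto
  have ce: "2 * eL (Cat m N) = Gf m (N - 1)" using Cat_eL[OF m] N by simp
  have fS: "finite S"
  proof (rule finite_subset)
    show "S \<subseteq> {..Gf m (N - 1)}" using ub by fastforce
  qed simp
  have "Max S = eL (Cat m N)"
  proof (rule Max_eqI[OF fS])
    fix y assume "y \<in> S" then show "y \<le> eL (Cat m N)" using ub ce by fastforce
  qed (rule cat)
  then show ?thesis unfolding g_def S_def[symmetric] using ce by simp
qed

definition Mt :: "nat \<Rightarrow> nat set set" where
  "Mt n = (\<lambda>i. {2*i, 2*i+1}) ` {..<n}"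

lemma Mt_Suc: "Mt (Suc n) = insert {2*n, 2*n+1} (Mt n)"
  unfolding Mt_def lessThan_Suc by simp

lemma Mt_verts: "verts (Mt n) \<subseteq> {..<2*n}"
  unfolding Mt_def verts_def by auto

lemma Mt_fin: "finite (Mt n)" unfolding Mt_def by simp

lemma Mt_notin: "2*n \<notin> verts (Mt n)" "2*n+1 \<notin> verts (Mt n)"
  using Mt_verts[of n] by auto

lemma Mt_acyclic: "acyclic_graph (Mt n)"
proof (induction n)
  case 0
  then show ?case unfolding Mt_def acyclic_graph_def simple_graph_def has_cycle_def by simp
next
  case (Suc n)
  show ?case unfolding Mt_Suc by (rule acyclic_insert_pendant[OF Suc.IH _ Mt_notin(2)]) simp
qed

lemma Mt_edge_notin: "{2*n, 2*n+1} \<notin> Mt n"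
  using Mt_notin(1)[of n] unfolding verts_def by auto

lemma Mt_card: "card (Mt n) = n"
proof (induction n)
  case 0 then show ?case unfolding Mt_def by simp
next
  case (Suc n) then show ?case unfolding Mt_Suc using Mt_edge_notin Mt_fin by simp
qed

lemma deg_out: "v \<notin> verts F \<Longrightarrow> degree F v = 0"
proof -
  assume "v \<notin> verts F"
  then have "{e\<in>F. v \<in> e} = {}" unfolding verts_def by auto
  then show ?thesis unfolding degree_def by (simp only: card.empty)
qed

lemma Mt_deg: "degree (Mt n) v \<le> 1"
proof (induction n)
  case 0 then show ?case using deg_out[of v "Mt 0"] unfolding Mt_def verts_def by simp
next
  case (Suc n)
  have "degree (Mt (Suc n)) v = degree (Mt n) v + (if v \<in> {2*n, 2*n+1} then 1 else 0)"
    unfolding Mt_Suc by (rule degree_insert[OF Mt_edge_notin Mt_fin])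
  moreover have "v \<in> {2*n, 2*n+1} \<Longrightarrow> degree (Mt n) v = 0" using deg_out Mt_notin by auto
  ultimately show ?case using Suc.IH by auto
qed

lemma Mt_maxdeg:
  assumes "n \<ge> 1" shows "max_degree (Mt n) = 1"
proof -
  have sg: "simple_graph (Mt n)" using Mt_acyclic unfolding acyclic_graph_def by simp
  have "{0,1} \<in> Mt n" unfolding Mt_def using assms by force
  then have v0: "0 \<in> verts (Mt n)" unfolding verts_def by blast
  then have "degree (Mt n) 0 = 1" using deg_ge1[OF sg] Mt_deg[of n 0] by (meson le_antisym)
  then have "1 \<in> degree (Mt n) ` verts (Mt n)" using v0 by (metis image_eqI)
  then show ?thesis unfolding max_degree_def using finite_verts[OF sg] Mt_deg[of n]
    by (intro Max_eqI) auto
qed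

lemma g1:
  assumes "N \<ge> 1" shows "g N 1 = 0"
proof -
  define S where "S = {eL F | F. acyclic_graph F \<and> card F = N \<and> max_degree F = 1}"
  have z: "y = 0" if yS: "y \<in> S" for y
  proof -
    obtain F where F: "y = eL F" "acyclic_graph F" "max_degree F = 1" using yS S_def by blast
    then have sg: "simple_graph F" unfolding acyclic_graph_def by simp
    have "(degree F v choose 2) = 0" if "v \<in> verts F" for v
      using deg_le_max[OF sg that] F(3) binomial_eq_0[of "degree F v" 2] by simp
    then have "(\<Sum>v\<in>verts F. degree F v choose 2) = 0" by (intro sum.neutral) blast
    then show ?thesis using eL_sum[OF sg] F(1) by simp
  qed
  have "eL (Mt N) \<in> S" unfolding S_def using Mt_acyclic Mt_card Mt_maxdeg[OF assms] by blast
  then have "S = {0}" using z by (metis empty_iff insertI1 subsetI subset_singletonD)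
  then show ?thesis unfolding g_def S_def[symmetric] by simp
qed

lemma sumT_rep: "(\<Sum>x\<leftarrow>replicate n c. x*(x+1)) = n * (c*(c+1))"
  by (simp add: sum_list_replicate)

lemma Gf_D:
  assumes m: "m \<ge> 1" and S: "S \<ge> m + 1"
  shows "Gf m S + 2 \<le> Gf (m+1) S"
proof -
  define q where "q = S div m"
  define k where "k = S mod m"
  have Sq: "S = q*m + k" unfolding q_def k_def by simp
  have km: "k < m" using m k_def by simp
  have G: "Gf m S = q*m*(m+1) + k*(k+1)" using Gf_qr[OF km] Sq by simp
  have m1: "m + 1 \<ge> 1" by simp
  show ?thesis
  proof (cases "k \<ge> 1")
    case True
    have q1: "q \<ge> 1" using S Sq km by (cases q) auto
    obtain q' where q': "q = q' + 1" using q1 by (metis le_add_diff_inverse2)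
    obtain k' where k': "k = k' + 1" using True by (metis le_add_diff_inverse2)
    define xs where "xs = [m+1, k'] @ replicate q' m"
    have "\<forall>x\<in>set xs. x \<le> m+1" unfolding xs_def using km k' by auto
    then have le: "(\<Sum>x\<leftarrow>xs. x*(x+1)) \<le> Gf (m+1) (sum_list xs)" using Gf_list[OF m1] by blast
    have "sum_list xs = S" unfolding xs_def Sq q' k' by (simp add: sum_list_replicate algebra_simps)
    moreover have "(\<Sum>x\<leftarrow>xs. x*(x+1)) = (m+1)*(m+2) + k'*(k'+1) + q'*(m*(m+1))"
      unfolding xs_def by (simp add: sum_list_replicate)
    moreover have "Gf m S + 2 \<le> (m+1)*(m+2) + k'*(k'+1) + q'*(m*(m+1))"
    proof -
      have "Gf m S + 2 = q'*(m*(m+1)) + m*(m+1) + (k'+1)*(k'+2) + 2" unfolding G q' k' by (simp add: algebra_simps)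
      moreover have "m*(m+1) + (k'+1)*(k'+2) + 2 \<le> (m+1)*(m+2) + k'*(k'+1)"
        using km k' by (simp add: algebra_simps)
      ultimately show ?thesis by simp
    qed
    ultimately show ?thesis using le by simp
  next
    case False
    then have k0: "k = 0" by simp
    have q2: "q \<ge> 2"
    proof (rule ccontr)
      assume "\<not> q \<ge> 2"
      then have "q \<le> 1" by simp
      then have "q*m \<le> 1*m" by (rule mult_le_mono1)
      then show False using S Sq k0 by linarith
    qed
    obtain q' where q': "q = q' + 2" using q2 by (metis le_add_diff_inverse2)
    obtain m' where m': "m = m' + 1" using m by (metis le_add_diff_inverse2)
    define xs where "xs = [m+1, m'] @ replicate q' m"
    have "\<forall>x\<in>set xs. x \<le> m+1" unfolding xs_def using m' by auto
    then have le: "(\<Sum>x\<leftarrow>xs. x*(x+1)) \<le> Gf (m+1) (sum_list xs)" using Gf_list[OF m1] by blast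
    have "sum_list xs = S" unfolding xs_def Sq q' k0 m' by (simp add: sum_list_replicate algebra_simps)
    moreover have "(\<Sum>x\<leftarrow>xs. x*(x+1)) = q*m*(m+1) + k*(k+1) + 2"
      unfolding xs_def q' k0 m' by (simp add: sum_list_replicate algebra_simps)
    ultimately show ?thesis using le G by simp
  qed
qed

theorem mainTheorem7:
  fixes N D :: nat
  assumes "N \<ge> D" and "D \<ge> 1"
  shows "g N 1 = 0
    \<and> (\<forall>k::nat. D \<ge> 2 \<longrightarrow> [N - 1 = k] (mod (D - 1)) \<longrightarrow> k \<le> D - 2 \<longrightarrow>
         real (g N D) = (real N - real k - 1) * real D / 2 + real ((k + 1) choose 2)
         \<and> (real N - real k - 1) * real D / 2 + real ((k + 1) choose 2) \<le> (real N - 1) * real D / 2)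
    \<and> (D \<ge> 2 \<longrightarrow> g (N + 1) D \<ge> g N D + 1)
    \<and> (N > D \<longrightarrow> g N (D + 1) \<ge> g N D + 1)"
proof (intro conjI allI impI)
  have N1: "N \<ge> 1" using assms by simp
  show "g N 1 = 0" using g1[OF N1] .
next
  fix k :: nat
  assume D2: "D \<ge> 2" and c: "[N - 1 = k] (mod (D - 1))" and kD: "k \<le> D - 2"
  define m where "m = D - 1"
  have m: "m \<ge> 1" and Dm: "D = m + 1" using D2 m_def by auto
  have km: "k < m" using kD D2 m_def by simp
  have kmod: "(N - 1) mod m = k" using c km unfolding cong_def m_def[symmetric] by simp
  define q where "q = (N - 1) div m"
  have Nq: "N - 1 = q*m + k" using kmod q_def by (metis div_mult_mod_eq)
  have N1: "N \<ge> 1" using assms by simp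
  have "2 * g N D = Gf m (N - 1)" using g_formula[OF m] assms Dm by simp
  also have "\<dots> = q*m*(m+1) + k*(k+1)" using Gf_qr[OF km] Nq by simp
  finally have gn: "2 * g N D = q*m*(m+1) + k*(k+1)" .
  have gq: "2 * real (g N D) = real q * m * (m+1) + real k * (k+1)"
    using arg_cong[OF gn, of real] by (simp add: algebra_simps)
  have NN: "N = q*m + k + 1" using Nq N1 by simp
  have rN: "real N - real k - 1 = real q * m" unfolding NN by simp
  have cn: "2 * ((k + 1) choose 2) = (k+1) * k" using two_choose[of "k+1"] by simp
  have ch: "2 * real ((k + 1) choose 2) = real (k+1) * real k"
    using arg_cong[OF cn, of real] by (simp add: algebra_simps)
  show "real (g N D) = (real N - real k - 1) * real D / 2 + real ((k + 1) choose 2)"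
    using gq rN ch Dm by (simp add: field_simps)
  have "real (k+1) \<le> real D" using kD D2 by simp
  then have "real (k+1) * real k \<le> real D * real k" by (rule mult_right_mono) simp
  then have "real (k+1) * real k \<le> real k * real D" by (simp add: mult.commute)
  then show "(real N - real k - 1) * real D / 2 + real ((k + 1) choose 2) \<le> (real N - 1) * real D / 2"
    using ch by (simp add: field_simps)
next
  assume D2: "D \<ge> 2"
  define m where "m = D - 1"
  have m: "m \<ge> 1" and Dm: "D = m + 1" using D2 m_def by auto
  have N1: "N \<ge> 1" using assms by simp
  have a: "2 * g N D = Gf m (N - 1)" using g_formula[OF m] assms Dm by simp
  have b: "2 * g (N+1) D = Gf m N" using g_formula[OF m, of "N+1"] assms Dm by simp
  have "Gf m N = Gf m (N - 1) + 2 * (1 + (N-1) mod m)" using Gf_inc[OF m, of "N-1"] N1 by simp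
  then show "g (N + 1) D \<ge> g N D + 1" using a b by simp
next
  assume ND: "N > D"
  show "g N (D + 1) \<ge> g N D + 1"
  proof (cases "D = 1")
    case True
    have "2 * g N (1+1) = Gf 1 (N - 1)" using ND True by (intro g_formula) auto
    then have "2 * g N 2 = Gf 1 (N - 1)" by (simp add: numeral_2_eq_2)
    then have "g N 2 = N - 1" unfolding Gf_def by simp
    moreover have "g N 1 = 0" using g1 ND by simp
    ultimately show ?thesis using True ND by (simp add: numeral_2_eq_2)
  next
    case False
    define m where "m = D - 1"
    have m: "m \<ge> 1" and Dm: "D = m + 1" using False assms m_def by auto
    have a: "2 * g N D = Gf m (N - 1)" using g_formula[OF m] assms Dm by simp
    have b: "2 * g N (D+1) = Gf (m+1) (N - 1)" using g_formula[of "m+1" N] ND Dm by simp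
    have "Gf m (N - 1) + 2 \<le> Gf (m+1) (N - 1)" using Gf_D[OF m] ND Dm by simp
    then show ?thesis using a b by simp
  qed
qed

end
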